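(* Let $r_V,r_A,a_1,a_2,b_1,b_2,c_V,c_A,K_{V,1},K_{V,2},K_{A,1},K_{A,2}>0$, $n>1$, $\mu_{V,1},\mu_{V,2},\mu_{A,1},\mu_{A,2}>0$, $d_{V,12},d_{V,21},d_{A,12},d_{A,21}>0$ and $\alpha_1,\alpha_2\in(0,1)$. For $i\ne j\in\{1,2\}$ put $d_{V,ij}'=d_{V,ij}\frac{\alpha_i^n}{\alpha_i^n+c_V^n}$, $d_{A,ij}'=d_{A,ij}\frac{\alpha_i^n}{\alpha_i^n+c_A^n}$, $K_{A,i}'=(1-\alpha_i)K_{A,i}$, and consider on $\mathbb{R}_+^4$ the system (for $i\ne j$) $$\begin{aligned} \dot V_i&=r_V\tfrac{A_i}{A_i+a_i}V_i\big(1-\tfrac{V_i}{K_{V,i}}\big)-d_{V,ij}'\tfrac{1}{1+b_iA_i}V_i+d_{V,ji}'\tfrac{1}{1+b_jA_j}V_j-\mu_{V,i}V_i,\\ \dot A_i&=r_AA_i\big(1-\tfrac{A_i}{K_{A,i}'}\big)-d_{A,ij}'A_i+d_{A,ji}'A_j-\mu_{A,i}A_i . \end{aligned}$$ Define $\mathcal{Q}_{0A,1}=\frac{r_A}{\mu_{A,1}+d_{A,12}'}$, $\mathcal{Q}_{0A,2}=\frac{r_A}{\mu_{A,2}+d_{A,21}'}$, $$\bar r_A=\tfrac{1}{2}(d_{A,12}'+\mu_{A,1}+d_{A,21}'+\mu_{A,2}),\quad \Delta_{r_A}=(d_{A,21}'-d_{A,12}'+\mu_{A,2}-\mu_{A,1})^2+4d_{A,21}'d_{A,12}',\quad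 r_{A,\min}=\bar r_A-\tfrac12\sqrt{\Delta_{r_A}}.$$ Then: 1. $E_{0000}=(0,0,0,0)$ is an equilibrium for all parameter values, and it is locally asymptotically stable (LAS) if $r_A<r_{A,\min}$. 2. If $\mathcal{Q}_{0A,1}\ge 1$ or $\mathcal{Q}_{0A,2}\ge 1$, there exists at least one equilibrium of the form $E_{0A_10A_2}=(0,A_{1,+},0,A_{2,+})$ with $A_{1,+},A_{2,+}>0$. Any such equilibrium is LAS if $B_1<0$ and $B_2>0$, where, with $j_{11}=r_V\frac{A_{1,+}}{A_{1,+}+a_1}-\frac{d_{V,12}'}{1+b_1A_{1,+}}-\mu_{V,1}$ and $j_{33}=r_V\frac{A_{2,+}}{A_{2,+}+a_2}-\frac{d_{V,21}'}{1+b_2A_{2,+}}-\mu_{V,2}$, $$B_1=j_{11}+j_{33},\qquad B_2=j_{11}j_{33}-\frac{d_{V,21}'}{1+b_2A_{2,+}}\cdot\frac{d_{V,12}'}{1+b_1A_{1,+}}.$$ 3. Suppose $\mathcal{Q}_{0A,1}\ge1$ or $\mathcal{Q}_{0A,2}\ge 1$, let $(A_{1,+},A_{2,+})$ with $A_{1,+},A_{2,+}>0$ be such that $(0,A_{1,+},0,A_{2,+})$ is an equilibrium, and set $$\mathcal{S}_{0V,1}=\frac{r_V\frac{A_{1,+}}{A_{1,+}+a_1}}{\frac{d_{V,12}'}{1+b_1A_{1,+}}+\mu_{V,1}},\qquad \mathcal{S}_{0V,2}=\frac{r_V\frac{A_{2,+}}{A_{2,+}+a_2}}{\frac{d_{V,21}'}{1+b_2A_{2,+}}+\mu_{V,2}}.$$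 If $\mathcal{S}_{0V,1}\ge1$ or $\mathcal{S}_{0V,2}\ge1$, there exists at least one coexistence equilibrium $E=(V_{1,+},A_{1,+},V_{2,+},A_{2,+})$ with all components positive. Such an equilibrium $E=(V_1,A_1,V_2,A_2)$ is LAS whenever $C_1>0$ and $C_2>0$, where $$J_{11}=-r_V\tfrac{A_1}{A_1+a_1}\tfrac{V_1}{K_{V,1}}-\tfrac{d_{V,21}'}{1+b_2A_2}\tfrac{V_2}{V_1},\quad J_{13}=\tfrac{d_{V,21}'}{1+b_2A_2},\quad J_{22}=-r_A\tfrac{A_1}{K_{A,1}'}-d_{A,21}'\tfrac{A_2}{A_1},\quad J_{24}=d_{A,21}',$$ $$J_{31}=\tfrac{d_{V,12}'}{1+b_1A_1},\quad J_{33}=-r_V\tfrac{A_2}{A_2+a_2}\tfrac{V_2}{K_{V,2}}-\tfrac{d_{V,12}'}{1+b_1A_1}\tfrac{V_1}{V_2},\quad J_{42}=d_{A,12}',\quad J_{44}=-r_A\tfrac{A_2}{K_{A,2}'}-d_{A,12}'\tfrac{A_1}{A_2},$$ $$P=-J_{42}J_{24}+J_{44}J_{33}+J_{44}J_{22}+J_{44}J_{11}-J_{31}J_{13}+J_{33}J_{22}+J_{33}J_{11}+J_{22}J_{11},$$ $$N=J_{42}J_{24}J_{33}+J_{42}J_{24}J_{11}+J_{44}J_{31}J_{13}-J_{44}J_{33}J_{22}-J_{44}J_{33}J_{11}-J_{44}J_{22}J_{11}+J_{31}J_{13}J_{22}-J_{33}J_{22}J_{11},$$ $$C_3=-J_{44}-J_{33}-J_{22}-J_{11},\qquad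 C_4=J_{42}J_{24}J_{31}J_{13}-J_{42}J_{24}J_{33}J_{11}-J_{44}J_{31}J_{13}J_{22}+J_{44}J_{33}J_{22}J_{11},$$ $$C_1=P-\frac{N}{C_3},\qquad C_2=N-\frac{C_3\,C_4}{C_1}.$$
   Context: This is a two-patch vector ($V_i$)–animal ($A_i$) model with two-way, anthropization-dependent migration; $\alpha_i$ is the anthropization level of patch $i$. LAS means locally asymptotically stable. *)

theory Defs
  imports "HOL-Analysis.Analysis"
begin

record params =
  rV :: real  rA :: real
  a1 :: real  a2 :: real  b1 :: real  b2 :: real
  cV :: real  cA :: real
  KV1 :: real  KV2 :: real  KA1 :: real  KA2 :: real
  hn :: real
  muV1 :: real  muV2 :: real  muA1 :: real  muA2 :: real
  dV12 :: real  dV21 :: real  dA12 :: real  dA21 :: real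
  al1 :: real  al2 :: real

definition dV12' :: "params \<Rightarrow> real" where
  "dV12' p = dV12 p * (al1 p powr hn p / (al1 p powr hn p + cV p powr hn p))"
definition dV21' :: "params \<Rightarrow> real" where
  "dV21' p = dV21 p * (al2 p powr hn p / (al2 p powr hn p + cV p powr hn p))"
definition dA12' :: "params \<Rightarrow> real" where
  "dA12' p = dA12 p * (al1 p powr hn p / (al1 p powr hn p + cA p powr hn p))"
definition dA21' :: "params \<Rightarrow> real" where
  "dA21' p = dA21 p * (al2 p powr hn p / (al2 p powr hn p + cA p powr hn p))"
definition KA1' :: "params \<Rightarrow> real" where "KA1' p = (1 - al1 p) * KA1 p"
definition KA2' :: "params \<Rightarrow> real" where "KA2' p = (1 - al2 p) * KA2 p"

definition field :: "params \<Rightarrow> real^4 \<Rightarrow> real^4" where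
  "field p x = (let V1 = x$1; A1 = x$2; V2 = x$3; A2 = x$4 in vector [
     rV p * (A1 / (A1 + a1 p)) * V1 * (1 - V1 / KV1 p)
       - dV12' p * (1 / (1 + b1 p * A1)) * V1 + dV21' p * (1 / (1 + b2 p * A2)) * V2 - muV1 p * V1,
     rA p * A1 * (1 - A1 / KA1' p) - dA12' p * A1 + dA21' p * A2 - muA1 p * A1,
     rV p * (A2 / (A2 + a2 p)) * V2 * (1 - V2 / KV2 p)
       - dV21' p * (1 / (1 + b2 p * A2)) * V2 + dV12' p * (1 / (1 + b1 p * A1)) * V1 - muV2 p * V2,
     rA p * A2 * (1 - A2 / KA2' p) - dA21' p * A2 + dA12' p * A1 - muA2 p * A2])"

definition st :: "real \<Rightarrow> real \<Rightarrow> real \<Rightarrow> real \<Rightarrow> real^4" where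
  "st V1 A1 V2 A2 = vector [V1, A1, V2, A2]"

definition is_solution_on :: "('a::real_normed_vector \<Rightarrow> 'a) \<Rightarrow> (real \<Rightarrow> 'a) \<Rightarrow> real \<Rightarrow> bool" where
  "is_solution_on f x T \<longleftrightarrow>
     (\<forall>t\<in>{0..T}. (x has_vector_derivative f (x t)) (at t within {0..T}))"

definition LAS :: "('a::real_normed_vector \<Rightarrow> 'a) \<Rightarrow> 'a \<Rightarrow> bool" where
  "LAS f e \<longleftrightarrow>
     (\<forall>\<epsilon>>0. \<exists>\<delta>>0. \<forall>x T. T \<ge> 0 \<and> is_solution_on f x T \<and> dist (x 0) e < \<delta> \<longrightarrow>
                          (\<forall>t\<in>{0..T}. dist (x t) e < \<epsilon>)) \<and>
     (\<exists>\<delta>>0. \<forall>x. (\<forall>T\<ge>0. is_solution_on f x T) \<and> dist (x 0) e < \<delta> \<longrightarrow> (x \<longlongrightarrow> e) at_top)"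

definition Q0A1 :: "params \<Rightarrow> real" where "Q0A1 p = rA p / (muA1 p + dA12' p)"
definition Q0A2 :: "params \<Rightarrow> real" where "Q0A2 p = rA p / (muA2 p + dA21' p)"
definition rAbar :: "params \<Rightarrow> real" where
  "rAbar p = (dA12' p + muA1 p + dA21' p + muA2 p) / 2"
definition DeltarA :: "params \<Rightarrow> real" where
  "DeltarA p = (dA21' p - dA12' p + muA2 p - muA1 p)^2 + 4 * dA21' p * dA12' p"
definition rAmin :: "params \<Rightarrow> real" where "rAmin p = rAbar p - sqrt (DeltarA p) / 2"

definition j11 :: "params \<Rightarrow> real \<Rightarrow> real" where
  "j11 p A1 = rV p * (A1 / (A1 + a1 p)) - dV12' p / (1 + b1 p * A1) - muV1 p"
definition j33 :: "params \<Rightarrow> real \<Rightarrow> real" where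
  "j33 p A2 = rV p * (A2 / (A2 + a2 p)) - dV21' p / (1 + b2 p * A2) - muV2 p"
definition B1 :: "params \<Rightarrow> real \<Rightarrow> real \<Rightarrow> real" where
  "B1 p A1 A2 = j11 p A1 + j33 p A2"
definition B2 :: "params \<Rightarrow> real \<Rightarrow> real \<Rightarrow> real" where
  "B2 p A1 A2 = j11 p A1 * j33 p A2 - (dV21' p / (1 + b2 p * A2)) * (dV12' p / (1 + b1 p * A1))"

definition S0V1 :: "params \<Rightarrow> real \<Rightarrow> real" where
  "S0V1 p A1 = (rV p * (A1 / (A1 + a1 p))) / (dV12' p / (1 + b1 p * A1) + muV1 p)"
definition S0V2 :: "params \<Rightarrow> real \<Rightarrow> real" where
  "S0V2 p A2 = (rV p * (A2 / (A2 + a2 p))) / (dV21' p / (1 + b2 p * A2) + muV2 p)"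

definition J11 where "J11 p V1 A1 V2 A2 =
  - rV p * (A1 / (A1 + a1 p)) * (V1 / KV1 p) - (dV21' p / (1 + b2 p * A2)) * (V2 / V1)"
definition J13 where "J13 p V1 A1 V2 A2 = dV21' p / (1 + b2 p * A2)"
definition J22 where "J22 p V1 A1 V2 A2 = - rA p * (A1 / KA1' p) - dA21' p * (A2 / A1)"
definition J24 where "J24 p V1 A1 V2 A2 = dA21' p"
definition J31 where "J31 p V1 A1 V2 A2 = dV12' p / (1 + b1 p * A1)"
definition J33 where "J33 p V1 A1 V2 A2 =
  - rV p * (A2 / (A2 + a2 p)) * (V2 / KV2 p) - (dV12' p / (1 + b1 p * A1)) * (V1 / V2)"
definition J42 where "J42 p V1 A1 V2 A2 = dA12' p"
definition J44 where "J44 p V1 A1 V2 A2 = - rA p * (A2 / KA2' p) - dA12' p * (A1 / A2)"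

definition Pc :: "params \<Rightarrow> real \<Rightarrow> real \<Rightarrow> real \<Rightarrow> real \<Rightarrow> real" where
  "Pc p V1 A1 V2 A2 = (let j11 = J11 p V1 A1 V2 A2; j13 = J13 p V1 A1 V2 A2;
     j22 = J22 p V1 A1 V2 A2; j24 = J24 p V1 A1 V2 A2; j31 = J31 p V1 A1 V2 A2;
     j33 = J33 p V1 A1 V2 A2; j42 = J42 p V1 A1 V2 A2; j44 = J44 p V1 A1 V2 A2 in
     - j42*j24 + j44*j33 + j44*j22 + j44*j11 - j31*j13 + j33*j22 + j33*j11 + j22*j11)"
definition Nc :: "params \<Rightarrow> real \<Rightarrow> real \<Rightarrow> real \<Rightarrow> real \<Rightarrow> real" where
  "Nc p V1 A1 V2 A2 = (let j11 = J11 p V1 A1 V2 A2; j13 = J13 p V1 A1 V2 A2;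
     j22 = J22 p V1 A1 V2 A2; j24 = J24 p V1 A1 V2 A2; j31 = J31 p V1 A1 V2 A2;
     j33 = J33 p V1 A1 V2 A2; j42 = J42 p V1 A1 V2 A2; j44 = J44 p V1 A1 V2 A2 in
     j42*j24*j33 + j42*j24*j11 + j44*j31*j13 - j44*j33*j22 - j44*j33*j11 - j44*j22*j11
     + j31*j13*j22 - j33*j22*j11)"
definition C3 :: "params \<Rightarrow> real \<Rightarrow> real \<Rightarrow> real \<Rightarrow> real \<Rightarrow> real" where
  "C3 p V1 A1 V2 A2 = - J44 p V1 A1 V2 A2 - J33 p V1 A1 V2 A2 - J22 p V1 A1 V2 A2 - J11 p V1 A1 V2 A2"
definition C4 :: "params \<Rightarrow> real \<Rightarrow> real \<Rightarrow> real \<Rightarrow> real \<Rightarrow> real" where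
  "C4 p V1 A1 V2 A2 = (let j11 = J11 p V1 A1 V2 A2; j13 = J13 p V1 A1 V2 A2;
     j22 = J22 p V1 A1 V2 A2; j24 = J24 p V1 A1 V2 A2; j31 = J31 p V1 A1 V2 A2;
     j33 = J33 p V1 A1 V2 A2; j42 = J42 p V1 A1 V2 A2; j44 = J44 p V1 A1 V2 A2 in
     j42*j24*j31*j13 - j42*j24*j33*j11 - j44*j31*j13*j22 + j44*j33*j22*j11)"
definition C1 :: "params \<Rightarrow> real \<Rightarrow> real \<Rightarrow> real \<Rightarrow> real \<Rightarrow> real" where
  "C1 p V1 A1 V2 A2 = Pc p V1 A1 V2 A2 - Nc p V1 A1 V2 A2 / C3 p V1 A1 V2 A2"
definition C2 :: "params \<Rightarrow> real \<Rightarrow> real \<Rightarrow> real \<Rightarrow> real \<Rightarrow> real" where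
  "C2 p V1 A1 V2 A2 = Nc p V1 A1 V2 A2 - C3 p V1 A1 V2 A2 * C4 p V1 A1 V2 A2 / C1 p V1 A1 V2 A2"

end

theory Submission
  imports Defs "HOL-Real_Asymp.Real_Asymp"
begin

lemma norm_sq_vec: "norm (x::real^'n) ^ 2 = (\<Sum>i\<in>UNIV. (x$i)^2)"
  by (simp add: norm_vec_def L2_set_def sum_nonneg)

lemma exp_decay_lim: "k > 0 \<Longrightarrow> ((\<lambda>t::real. C * exp (-(k*t))) \<longlongrightarrow> 0) at_top"
  by real_asymp

lemma stay_lemma:
  fixes f :: "real^'n \<Rightarrow> real^'n" and e :: "real^'n" and w :: "'n \<Rightarrow> real"
    and phi :: "real \<Rightarrow> real"
  assumes T: "T \<ge> 0"
    and cont: "continuous_on {0..T} phi"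
    and der: "\<And>t. 0 < t \<Longrightarrow> t < T \<Longrightarrow> phi t < L \<Longrightarrow> \<exists>y. (phi has_real_derivative y) (at t) \<and> y \<le> 0"
    and start: "phi 0 < L"
  shows "\<forall>t\<in>{0..T}. phi t < L"
proof (rule ccontr)
  assume "\<not> (\<forall>t\<in>{0..T}. phi t < L)"
  define B where "B = {0..T} \<inter> phi -` {L..}"
  have ne: "B \<noteq> {}" using \<open>\<not> _\<close> unfolding B_def by force
  have "closed B" unfolding B_def
    by (rule continuous_closed_preimage[OF cont]) auto
  then have "compact B" unfolding B_def by (meson B_def bounded_Int bounded_closed_interval compact_eq_bounded_closed)
  then obtain t1 where t1: "t1 \<in> B" "\<And>s. s \<in> B \<Longrightarrow> t1 \<le> s"
    using compact_attains_inf[OF _ ne] by blast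
  have t1T: "0 \<le> t1" "t1 \<le> T" "phi t1 \<ge> L" using t1 unfolding B_def by auto
  have below: "phi s < L" if "0 \<le> s" "s < t1" for s
  proof (rule ccontr)
    assume "\<not> phi s < L"
    then have "s \<in> B" unfolding B_def using that t1T by auto
    then show False using t1(2) that by fastforce
  qed
  have "phi t1 \<le> phi 0"
  proof (rule DERIV_nonpos_imp_decreasing_open[of 0 t1])
    show "0 \<le> t1" by fact
    show "\<exists>y. (phi has_real_derivative y) (at x) \<and> y \<le> 0" if "0 < x" "x < t1" for x
      using der[of x] below[of x] that t1T by auto
    show "continuous_on {0..t1} phi" using cont continuous_on_subset t1T by fastforce
  qed
  then show False using start t1T by auto
qed

lemma LAS_lyap:
  fixes f :: "real^'n \<Rightarrow> real^'n" and e :: "real^'n" and w :: "'n \<Rightarrow> real"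
  assumes w: "\<And>i. w i > 0" and r: "r > 0" and c: "c > 0"
    and L: "\<And>x. norm (x - e) < r \<Longrightarrow> (\<Sum>i\<in>UNIV. w i * (x$i - e$i) * (f x $ i)) \<le> - c * (norm (x - e))^2"
  shows "LAS f e"
proof -
  define m where "m = Min (range w)"
  define M where "M = Max (range w)"
  have m: "m > 0" unfolding m_def using w by (simp)
  have wm: "m \<le> w i" for i unfolding m_def by simp
  have wM: "w i \<le> M" for i unfolding M_def by simp
  have mM: "m \<le> M" using wm wM order_trans by blast
  have M: "M > 0" using m mM by linarith
  define W where "W = (\<lambda>x::real^'n. \<Sum>i\<in>UNIV. w i * (x$i - e$i)^2)"
  have Wlo: "m * norm (x - e)^2 \<le> W x" for x
  proof -
    have "m * norm (x - e)^2 = (\<Sum>i\<in>UNIV. m * (x$i - e$i)^2)"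
      by (simp add: norm_sq_vec sum_distrib_left)
    also have "\<dots> \<le> W x" unfolding W_def
      by (rule sum_mono) (simp add: mult_right_mono wm)
    finally show ?thesis .
  qed
  have Whi: "W x \<le> M * norm (x - e)^2" for x
  proof -
    have "M * norm (x - e)^2 = (\<Sum>i\<in>UNIV. M * (x$i - e$i)^2)"
      by (simp add: norm_sq_vec sum_distrib_left)
    moreover have "W x \<le> (\<Sum>i\<in>UNIV. M * (x$i - e$i)^2)" unfolding W_def
      by (rule sum_mono) (simp add: mult_right_mono wM)
    ultimately show ?thesis by simp
  qed
  have derW: "((\<lambda>t. W (x t)) has_real_derivative
       2 * (\<Sum>i\<in>UNIV. w i * (x t $i - e$i) * (f (x t) $ i))) (at t within {0..T})"
    if sol: "is_solution_on f x T" and t: "t \<in> {0..T}" for x T t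
  proof -
    have xd: "(x has_vector_derivative f (x t)) (at t within {0..T})"
      using sol t unfolding is_solution_on_def by auto
    have ci: "((\<lambda>t. x t $ i) has_real_derivative (f (x t) $ i)) (at t within {0..T})" for i
      using bounded_linear.has_vector_derivative[OF bounded_linear_vec_nth xd, of i]
      by (simp add: has_real_derivative_iff_has_vector_derivative)
    have ti: "((\<lambda>t. w i * (x t $i - e$i)^2) has_real_derivative
         w i * (2 * (x t $i - e$i) * (f (x t) $ i))) (at t within {0..T})" for i
    proof -
      have "((\<lambda>t. (x t $i - e$i)^2) has_real_derivative
         (2 * (x t $i - e$i) * (f (x t) $ i))) (at t within {0..T})"
        by (rule DERIV_cong[OF DERIV_power[OF DERIV_diff[OF ci DERIV_const]]]) simp
      then show ?thesis by (intro DERIV_cmult) simp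
    qed
    have "((\<lambda>t. W (x t)) has_real_derivative
       (\<Sum>i\<in>UNIV. w i * (2 * (x t $i - e$i) * (f (x t) $ i)))) (at t within {0..T})"
      unfolding W_def by (rule DERIV_sum) (rule ti)
    then show ?thesis
      by (rule DERIV_cong) (unfold sum_distrib_left, rule sum.cong, simp, simp only: mult_ac)
  qed
  have contW: "continuous_on {0..T} (\<lambda>t. W (x t))" if sol: "is_solution_on f x T" for x T
    using derW[OF sol] by (meson DERIV_continuous continuous_on_eq_continuous_within)
  have derWat: "((\<lambda>t. W (x t)) has_real_derivative
       2 * (\<Sum>i\<in>UNIV. w i * (x t $i - e$i) * (f (x t) $ i))) (at t)"
    if sol: "is_solution_on f x T" and t: "0 < t" "t < T" for x T t
  proof -
    have "at t within {0..T} = at t"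
      by (rule at_within_interior) (use t in auto)
    then show ?thesis using derW[OF sol, of t] t by auto
  qed
  have stay: "\<forall>t\<in>{0..T}. W (x t) < m * \<rho>^2"
    if sol: "is_solution_on f x T" and T: "T \<ge> 0" and rho: "0 < \<rho>" "\<rho> \<le> r"
      and x0: "W (x 0) < m * \<rho>^2" for x T \<rho>
  proof (rule stay_lemma[OF T contW[OF sol] _ x0])
    fix t assume t: "0 < t" "t < T" "W (x t) < m * \<rho>^2"
    have "m * norm (x t - e)^2 < m * \<rho>^2" using Wlo[of "x t"] t(3) by linarith
    then have "norm (x t - e)^2 < \<rho>^2" using m by simp
    then have "norm (x t - e) < \<rho>" using rho by (smt (verit) power_mono norm_ge_zero)
    then have "norm (x t - e) < r" using rho by linarith
    then have "(\<Sum>i\<in>UNIV. w i * (x t $i - e$i) * (f (x t) $ i)) \<le> - c * norm (x t - e)^2"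
      by (rule L)
    moreover have "c * norm (x t - e)^2 \<ge> 0" using c by simp
    ultimately have "2 * (\<Sum>i\<in>UNIV. w i * (x t $i - e$i) * (f (x t) $ i)) \<le> 0"
      by linarith
    then show "\<exists>y. ((\<lambda>t. W (x t)) has_real_derivative y) (at t) \<and> y \<le> 0"
      using derWat[OF sol t(1,2)] by blast
  qed
  have ball: "\<forall>t\<in>{0..T}. dist (x t) e < \<rho>"
    if sol: "is_solution_on f x T" and T: "T \<ge> 0" and rho: "0 < \<rho>" "\<rho> \<le> r"
      and x0: "dist (x 0) e < \<rho> * sqrt (m / M)" for x T \<rho>
  proof
    fix t assume t: "t \<in> {0..T}"
    have "norm (x 0 - e) < \<rho> * sqrt (m / M)" using x0 by (simp add: dist_norm)
    then have "norm (x 0 - e)^2 < (\<rho> * sqrt (m / M))^2"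
      by (simp add: power_strict_mono)
    also have "\<dots> = \<rho>^2 * m / M" using m M by (simp add: power_mult_distrib)
    finally have "M * norm (x 0 - e)^2 < m * \<rho>^2" using M by (simp add: field_simps)
    then have "W (x 0) < m * \<rho>^2" using Whi[of "x 0"] by linarith
    then have "W (x t) < m * \<rho>^2" using stay[OF sol T rho] t by blast
    then have "m * norm (x t - e)^2 < m * \<rho>^2" using Wlo[of "x t"] by linarith
    then have "norm (x t - e)^2 < \<rho>^2" using m by simp
    then have "norm (x t - e) < \<rho>" using rho by (smt (verit) power_mono norm_ge_zero)
    then show "dist (x t) e < \<rho>" by (simp add: dist_norm)
  qed
  have delpos: "\<rho> * sqrt (m / M) > 0" if "\<rho> > 0" for \<rho> using m M that by simp
  have part1: "\<forall>\<epsilon>>0. \<exists>\<delta>>0. \<forall>x T. T \<ge> 0 \<and> is_solution_on f x T \<and> dist (x 0) e < \<delta> \<longrightarrow>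
                          (\<forall>t\<in>{0..T}. dist (x t) e < \<epsilon>)"
  proof (intro allI impI)
    fix \<epsilon> :: real assume "\<epsilon> > 0"
    define \<rho> where "\<rho> = min \<epsilon> r"
    have rho: "0 < \<rho>" "\<rho> \<le> r" "\<rho> \<le> \<epsilon>" using \<open>\<epsilon> > 0\<close> r by (auto simp: \<rho>_def)
    show "\<exists>\<delta>>0. \<forall>x T. T \<ge> 0 \<and> is_solution_on f x T \<and> dist (x 0) e < \<delta> \<longrightarrow>
                          (\<forall>t\<in>{0..T}. dist (x t) e < \<epsilon>)"
      using ball[OF _ _ rho(1,2)] delpos[OF rho(1)] rho(3) by force
  qed
  have part2: "\<exists>\<delta>>0. \<forall>x. (\<forall>T\<ge>0. is_solution_on f x T) \<and> dist (x 0) e < \<delta> \<longrightarrow> (x \<longlongrightarrow> e) at_top"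
  proof (intro exI[of _ "r * sqrt (m / M)"] conjI allI impI)
    show "r * sqrt (m / M) > 0" using delpos[OF r] .
    fix x assume a: "(\<forall>T\<ge>0. is_solution_on f x T) \<and> dist (x 0) e < r * sqrt (m / M)"
    have inr: "norm (x t - e) < r" if "t \<ge> 0" for t
      using ball[of x t r] a that r by (auto simp: dist_norm)
    define k where "k = 2 * c / M"
    have k: "k > 0" using c M by (simp add: k_def)
    have decay: "W (x t) * exp (k * t) \<le> W (x 0)" if t: "t \<ge> 0" for t
    proof -
      have sol: "is_solution_on f x (t+1)" using a t by auto
      have "W (x 0) * exp (k * 0) \<ge> W (x t) * exp (k * t)"
      proof (rule DERIV_nonpos_imp_decreasing_open[of 0 t])
        show "0 \<le> t" by fact
        show "continuous_on {0..t} (\<lambda>s. W (x s) * exp (k * s))"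
          by (intro continuous_intros continuous_on_subset[OF contW[OF sol]]) (auto)
        fix s assume s: "0 < s" "s < t"
        have d: "((\<lambda>t. W (x t)) has_real_derivative
           2 * (\<Sum>i\<in>UNIV. w i * (x s $i - e$i) * (f (x s) $ i))) (at s)"
          using derWat[OF sol, of s] s by auto
        have le: "2 * (\<Sum>i\<in>UNIV. w i * (x s $i - e$i) * (f (x s) $ i)) + k * W (x s) \<le> 0"
        proof -
          have "2 * (\<Sum>i\<in>UNIV. w i * (x s $i - e$i) * (f (x s) $ i)) \<le> - 2 * c * norm (x s - e)^2"
            using L[OF inr[of s]] s by simp
          moreover have "k * W (x s) \<le> 2 * c * norm (x s - e)^2"
          proof -
            have "k * W (x s) \<le> k * (M * norm (x s - e)^2)"
              using Whi k by (simp add: mult_left_mono)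
            also have "\<dots> = 2 * c * norm (x s - e)^2" using M by (simp add: k_def)
            finally show ?thesis .
          qed
          ultimately show ?thesis by linarith
        qed
        define D where "D = 2 * (\<Sum>i\<in>UNIV. w i * (x s $i - e$i) * (f (x s) $ i))"
        have ex: "((\<lambda>s. exp (k * s)) has_real_derivative exp (k * s) * k) (at s)"
          by (rule DERIV_cong[OF DERIV_chain'[OF DERIV_cmult_Id DERIV_exp]]) simp
        have dp: "((\<lambda>s. W (x s) * exp (k * s)) has_real_derivative
            D * exp (k * s) + exp (k * s) * k * W (x s)) (at s)"
          using DERIV_mult[OF d ex] unfolding D_def .
        have "(D + k * W (x s)) * exp (k * s) \<le> 0"
          using le unfolding D_def by (intro mult_nonpos_nonneg) auto
        then have "D * exp (k * s) + exp (k * s) * k * W (x s) \<le> 0"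
          by (simp add: algebra_simps)
        then show "\<exists>y. ((\<lambda>s. W (x s) * exp (k * s)) has_real_derivative y) (at s) \<and> y \<le> 0"
          using dp by blast
      qed
      then show ?thesis by simp
    qed
    have bound: "norm (x t - e) \<le> sqrt (W (x 0) / m * exp (-(k*t)))" if t: "t \<ge> 0" for t
    proof -
      have eq: "W (x t) = (W (x t) * exp (k * t)) * exp (-(k * t))"
        by (simp add: exp_minus field_simps)
      have "(W (x t) * exp (k * t)) * exp (-(k * t)) \<le> W (x 0) * exp (-(k * t))"
        by (rule mult_right_mono[OF decay[OF t]]) simp
      then have "m * norm (x t - e)^2 \<le> W (x 0) * exp (-(k*t))"
        using Wlo[of "x t"] eq by linarith
      then have "norm (x t - e)^2 \<le> W (x 0) / m * exp (-(k*t))"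
        using m by (simp add: field_simps)
      then show ?thesis by (simp add: real_le_rsqrt)
    qed
    have lim0: "((\<lambda>t. sqrt (W (x 0) / m * exp (-(k*t)))) \<longlongrightarrow> 0) at_top"
      using tendsto_real_sqrt[OF exp_decay_lim[OF k, of "W (x 0) / m"]] by simp
    have "((\<lambda>t. x t - e) \<longlongrightarrow> 0) at_top"
      by (rule Lim_null_comparison[OF _ lim0]) (use bound in \<open>auto simp: eventually_at_top_linorder\<close>)
    then show "(x \<longlongrightarrow> e) at_top" by (simp add: LIM_zero_iff)
  qed
  show ?thesis unfolding LAS_def using part1 part2 by blast
qed

lemma LAS_deriv:
  fixes f :: "real^'n \<Rightarrow> real^'n" and e :: "real^'n" and M :: "'n \<Rightarrow> 'n \<Rightarrow> real" and w :: "'n \<Rightarrow> real"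
  assumes der: "\<And>i. ((\<lambda>x. f x $ i) has_derivative (\<lambda>h. \<Sum>j\<in>UNIV. M i j * h$j)) (at e)"
    and fe: "f e = 0" and w: "\<And>i. w i > 0" and c: "c > 0"
    and Q: "\<And>y. (\<Sum>i\<in>UNIV. w i * y$i * (\<Sum>j\<in>UNIV. M i j * y$j)) \<le> - c * norm y ^ 2"
  shows "LAS f e"
proof -
  define S where "S = (\<Sum>i\<in>UNIV. w i)"
  have S: "S > 0" unfolding S_def using w by (simp add: sum_pos)
  define \<eta> where "\<eta> = c / (2 * S)"
  have eta: "\<eta> > 0" using c S by (simp add: \<eta>_def)
  have "\<forall>i. \<exists>d>0. \<forall>y. norm (y - e) < d \<longrightarrow>
      norm (f y $ i - f e $ i - (\<Sum>j\<in>UNIV. M i j * (y - e)$j)) \<le> \<eta> * norm (y - e)"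
    using der eta unfolding has_derivative_at_alt by blast
  then obtain d where d: "\<And>i. d i > 0" and
    dd: "\<And>i y. norm (y - e) < d i \<Longrightarrow>
      norm (f y $ i - f e $ i - (\<Sum>j\<in>UNIV. M i j * (y - e)$j)) \<le> \<eta> * norm (y - e)"
    by metis
  define r where "r = Min (range d)"
  have r: "r > 0" unfolding r_def using d by simp
  have rd: "r \<le> d i" for i unfolding r_def by simp
  show ?thesis
  proof (rule LAS_lyap[OF w r, of "c/2"])
    show "c/2 > 0" using c by simp
    fix x assume x: "norm (x - e) < r"
    define y where "y = x - e"
    have ny: "norm y < r" using x y_def by simp
    have R: "\<bar>f x $ i - (\<Sum>j\<in>UNIV. M i j * y$j)\<bar> \<le> \<eta> * norm y" for i
      using dd[of x i] rd[of i] x fe unfolding y_def by simp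
    have trm: "w i * y$i * f x $ i \<le> w i * y$i * (\<Sum>j\<in>UNIV. M i j * y$j) + w i * (\<eta> * norm y ^ 2)" for i
    proof -
      have "w i * y$i * f x $ i - w i * y$i * (\<Sum>j\<in>UNIV. M i j * y$j)
          = w i * (y$i * (f x $ i - (\<Sum>j\<in>UNIV. M i j * y$j)))" by (simp add: algebra_simps)
      also have "\<dots> \<le> w i * (\<bar>y$i\<bar> * \<bar>f x $ i - (\<Sum>j\<in>UNIV. M i j * y$j)\<bar>)"
        using w[of i] by (intro mult_left_mono) (auto simp: abs_mult[symmetric])
      also have "\<dots> \<le> w i * (norm y * (\<eta> * norm y))"
        using w[of i] R[of i] by (intro mult_left_mono mult_mono) (auto simp: component_le_norm_cart)
      finally show ?thesis by (simp add: power2_eq_square algebra_simps)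
    qed
    have "(\<Sum>i\<in>UNIV. w i * (x$i - e$i) * (f x $ i)) = (\<Sum>i\<in>UNIV. w i * y$i * (f x $ i))"
      unfolding y_def by simp
    also have "\<dots> \<le> (\<Sum>i\<in>UNIV. w i * y$i * (\<Sum>j\<in>UNIV. M i j * y$j) + w i * (\<eta> * norm y ^ 2))"
      by (rule sum_mono) (rule trm)
    also have "\<dots> = (\<Sum>i\<in>UNIV. w i * y$i * (\<Sum>j\<in>UNIV. M i j * y$j)) + S * (\<eta> * norm y ^ 2)"
      by (simp add: sum.distrib S_def sum_distrib_right)
    also have "\<dots> \<le> - c * norm y ^ 2 + S * (\<eta> * norm y ^ 2)"
      using Q[of y] by linarith
    also have "S * (\<eta> * norm y ^ 2) = c/2 * norm y ^ 2"
      using S by (simp add: \<eta>_def)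
    finally show "(\<Sum>i\<in>UNIV. w i * (x$i - e$i) * (f x $ i)) \<le> - (c/2) * norm (x - e) ^ 2"
      unfolding y_def by simp
  qed
qed

lemma psd2:
  fixes \<alpha> \<beta> \<gamma> u v :: real
  assumes "\<alpha> \<ge> 0" "\<gamma> \<ge> 0" "\<alpha> * \<gamma> \<ge> \<beta>^2"
  shows "\<alpha> * u^2 + 2 * \<beta> * u * v + \<gamma> * v^2 \<ge> 0"
proof (cases "\<alpha> = 0")
  case True
  then have "\<beta>^2 \<le> 0" using assms by simp
  then have "\<beta> = 0" by (metis power2_less_eq_zero_iff)
  then show ?thesis using True assms by simp
next
  case False
  then have a: "\<alpha> > 0" using assms by simp
  have "\<alpha> * (\<alpha> * u^2 + 2 * \<beta> * u * v + \<gamma> * v^2) = (\<alpha> * u + \<beta> * v)^2 + (\<alpha> * \<gamma> - \<beta>^2) * v^2"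
    by (simp add: power2_eq_square algebra_simps)
  also have "\<dots> \<ge> 0" using assms by simp
  finally show ?thesis using a by (simp add: zero_le_mult_iff)
qed

lemma neg2:
  fixes a b g d :: real
  assumes "a < 0" "b > 0" "g > 0" "a * d > b * g"
  shows "\<exists>m>0. \<forall>u v. g * u * (a * u + b * v) + b * v * (g * u + d * v) \<le> - m * (u^2 + v^2)"
proof -
  define p where "p = g * a"
  define q where "q = b * g"
  define s where "s = b * d"
  have p: "p < 0" unfolding p_def using assms by (simp add: mult_pos_neg)
  have d: "d < 0"
  proof (rule ccontr)
    assume "\<not> d < 0"
    then have "a * d \<le> 0" using assms by (simp add: mult_nonpos_nonneg)
    then show False using assms by (smt (verit) mult_pos_pos)
  qed
  have s: "s < 0" unfolding s_def using assms d by (simp add: mult_pos_neg)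
  have det: "p * s - q^2 > 0"
  proof -
    have "p * s - q^2 = g * b * (a * d - b * g)" unfolding p_def q_def s_def
      by (simp add: power2_eq_square algebra_simps)
    then show ?thesis using assms by simp
  qed
  define m where "m = (p * s - q^2) / (-(p + s))"
  have tr: "-(p+s) > 0" using p s by simp
  have m: "m > 0" unfolding m_def using det tr by simp
  have m_eq: "m * (-(p+s)) = p * s - q^2" unfolding m_def using tr by simp
  have alpha: "-p - m \<ge> 0"
  proof -
    have "m * (-(p+s)) \<le> (-p) * (-(p+s))" using m_eq by (simp add: algebra_simps power2_eq_square)
      (smt (verit) zero_le_square)
    then show ?thesis using mult_right_le_imp_le[OF _ tr] by simp
  qed
  have gamma: "-s - m \<ge> 0"
  proof -
    have "m * (-(p+s)) \<le> (-s) * (-(p+s))" using m_eq by (simp add: algebra_simps power2_eq_square)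
      (smt (verit) zero_le_square)
    then show ?thesis using mult_right_le_imp_le[OF _ tr] by simp
  qed
  have ag: "(-p - m) * (-s - m) \<ge> (-q)^2"
  proof -
    have "(-p - m) * (-s - m) - (-q)^2 = m^2 + (p * s - q^2 + m * (p + s))"
      by (simp add: power2_eq_square algebra_simps)
    also have "p * s - q^2 + m * (p + s) = 0" using m_eq by (simp add: algebra_simps)
    finally have "(-p - m) * (-s - m) - (-q)^2 = m^2" by simp
    moreover have "m^2 \<ge> 0" by simp
    ultimately show ?thesis by linarith
  qed
  show ?thesis
  proof (intro exI[of _ m] conjI allI)
    show "m > 0" by fact
    fix u v :: real
    have "(-p - m) * u^2 + 2 * (-q) * u * v + (-s - m) * v^2 \<ge> 0"
      by (rule psd2[OF alpha gamma ag])
    moreover have "g * u * (a * u + b * v) + b * v * (g * u + d * v) = p * u^2 + 2 * q * u * v + s * v^2"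
      unfolding p_def q_def s_def by (simp add: power2_eq_square algebra_simps)
    ultimately show "g * u * (a * u + b * v) + b * v * (g * u + d * v) \<le> - m * (u^2 + v^2)"
      by (simp add: algebra_simps)
  qed
qed

lemma cross_bound:
  fixes g a b t :: real
  assumes "t > 0"
  shows "g * a * b \<le> t * a^2 + g^2 / (4 * t) * b^2"
proof -
  have "0 \<le> (2 * t * a - g * b)^2" by simp
  then have "4 * t * (g * a * b) \<le> 4 * t * (t * a^2 + g^2 / (4 * t) * b^2)"
    using assms by (simp add: power2_eq_square algebra_simps)
  then show ?thesis using assms by simp
qed

lemma block_Q:
  fixes M :: "4 \<Rightarrow> 4 \<Rightarrow> real"
  assumes z: "M 2 1 = 0" "M 2 3 = 0" "M 4 1 = 0" "M 4 3 = 0"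
    and V: "M 1 1 < 0" "M 1 3 > 0" "M 3 1 > 0" "M 1 1 * M 3 3 > M 1 3 * M 3 1"
    and A: "M 2 2 < 0" "M 2 4 > 0" "M 4 2 > 0" "M 2 2 * M 4 4 > M 2 4 * M 4 2"
  shows "\<exists>w c. (\<forall>i. w i > 0) \<and> c > 0 \<and>
           (\<forall>y. (\<Sum>i\<in>UNIV. w i * y$i * (\<Sum>j\<in>UNIV. M i j * y$j)) \<le> - c * norm y ^ 2)"
proof -
  obtain mV where mV: "mV > 0" and qV: "\<And>u v. M 3 1 * u * (M 1 1 * u + M 1 3 * v) + M 1 3 * v * (M 3 1 * u + M 3 3 * v) \<le> - mV * (u^2 + v^2)"
    using neg2[OF V] by blast
  obtain mA where mA: "mA > 0" and qA: "\<And>u v. M 4 2 * u * (M 2 2 * u + M 2 4 * v) + M 2 4 * v * (M 4 2 * u + M 4 4 * v) \<le> - mA * (u^2 + v^2)"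
    using neg2[OF A] by blast
  define t where "t = mV / 4"
  have t: "t > 0" using mV by (simp add: t_def)
  define g12 where "g12 = M 3 1 * M 1 2"
  define g14 where "g14 = M 3 1 * M 1 4"
  define g32 where "g32 = M 1 3 * M 3 2"
  define g34 where "g34 = M 1 3 * M 3 4"
  define G where "G = (g12^2 + g14^2 + g32^2 + g34^2) / (4 * t)"
  have G: "G \<ge> 0" unfolding G_def using t by simp
  define K where "K = (G + 1) / mA"
  have K: "K > 0" unfolding K_def using G mA by simp
  define w :: "4 \<Rightarrow> real" where "w = (\<lambda>i. if i = 1 then M 3 1 else if i = 3 then M 1 3 else if i = 2 then K * M 4 2 else K * M 2 4)"
  have w1: "w 1 = M 3 1" and w3: "w 3 = M 1 3" and w2: "w 2 = K * M 4 2" and w4: "w 4 = K * M 2 4"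
    unfolding w_def by simp_all
  have wpos: "\<forall>i. w i > 0"
    unfolding forall_4 using w1 w2 w3 w4 V A K by simp
  define c where "c = min (mV / 2) 1"
  have c: "c > 0" using mV by (simp add: c_def)
  show ?thesis
  proof (intro exI[of _ w] exI[of _ c] conjI wpos c allI)
    fix y :: "real^4"
    define y1 where "y1 = y$1"
    define y2 where "y2 = y$2"
    define y3 where "y3 = y$3"
    define y4 where "y4 = y$4"
    have ny: "norm y ^ 2 = y1^2 + y2^2 + y3^2 + y4^2"
      unfolding norm_sq_vec sum_4 y1_def y2_def y3_def y4_def ..
    have expand: "(\<Sum>i\<in>UNIV. w i * y$i * (\<Sum>j\<in>UNIV. M i j * y$j)) =
       (M 3 1 * y1 * (M 1 1 * y1 + M 1 3 * y3) + M 1 3 * y3 * (M 3 1 * y1 + M 3 3 * y3))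
       + K * (M 4 2 * y2 * (M 2 2 * y2 + M 2 4 * y4) + M 2 4 * y4 * (M 4 2 * y2 + M 4 4 * y4))
       + (g12 * y1 * y2 + g14 * y1 * y4 + g32 * y3 * y2 + g34 * y3 * y4)"
      unfolding sum_4 w1 w2 w3 w4 z y1_def y2_def y3_def y4_def g12_def g14_def g32_def g34_def
      by (simp add: algebra_simps)
    have cr: "g12 * y1 * y2 + g14 * y1 * y4 + g32 * y3 * y2 + g34 * y3 * y4
        \<le> (t * y1^2 + g12^2 / (4 * t) * y2^2) + (t * y1^2 + g14^2 / (4 * t) * y4^2)
          + (t * y3^2 + g32^2 / (4 * t) * y2^2) + (t * y3^2 + g34^2 / (4 * t) * y4^2)"
      using cross_bound[OF t] by (intro add_mono) auto
    have cr2: "(t * y1^2 + g12^2 / (4 * t) * y2^2) + (t * y1^2 + g14^2 / (4 * t) * y4^2)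
          + (t * y3^2 + g32^2 / (4 * t) * y2^2) + (t * y3^2 + g34^2 / (4 * t) * y4^2)
        \<le> (mV / 2) * (y1^2 + y3^2) + G * (y2^2 + y4^2)"
    proof -
      have "g12^2 / (4 * t) * y2^2 + g32^2 / (4 * t) * y2^2 = ((g12^2 + g32^2) / (4 * t)) * y2^2"
        by (simp add: add_divide_distrib algebra_simps)
      also have "\<dots> \<le> G * y2^2"
        unfolding G_def by (intro mult_right_mono divide_right_mono) (use t in auto)
      finally have h1: "g12^2 / (4 * t) * y2^2 + g32^2 / (4 * t) * y2^2 \<le> G * y2^2" .
      have "g14^2 / (4 * t) * y4^2 + g34^2 / (4 * t) * y4^2 = ((g14^2 + g34^2) / (4 * t)) * y4^2"
        by (simp add: add_divide_distrib algebra_simps)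
      also have "\<dots> \<le> G * y4^2"
        unfolding G_def by (intro mult_right_mono divide_right_mono) (use t in auto)
      finally have h2: "g14^2 / (4 * t) * y4^2 + g34^2 / (4 * t) * y4^2 \<le> G * y4^2" .
      have e1: "(mV/2) * (y1^2 + y3^2) = t * y1^2 + t * y1^2 + t * y3^2 + t * y3^2"
        by (simp add: t_def algebra_simps)
      have e2: "G * (y2^2 + y4^2) = G * y2^2 + G * y4^2" by (simp add: algebra_simps)
      show ?thesis using h1 h2 e1 e2 by linarith
    qed
    have qA': "K * (M 4 2 * y2 * (M 2 2 * y2 + M 2 4 * y4) + M 2 4 * y4 * (M 4 2 * y2 + M 4 4 * y4))
        \<le> K * (- mA * (y2^2 + y4^2))"
      using qA K by (intro mult_left_mono) auto
    have KmA: "K * (- mA * (y2^2 + y4^2)) = - (G + 1) * (y2^2 + y4^2)"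
      unfolding K_def using mA by (simp add: field_simps)
    have "(\<Sum>i\<in>UNIV. w i * y$i * (\<Sum>j\<in>UNIV. M i j * y$j))
        \<le> - mV * (y1^2 + y3^2) - (G + 1) * (y2^2 + y4^2) + (mV / 2) * (y1^2 + y3^2) + G * (y2^2 + y4^2)"
      unfolding expand using qV[of y1 y3] qA' KmA cr cr2 by linarith
    also have "\<dots> = - ((mV/2) * (y1^2 + y3^2)) - (y2^2 + y4^2)" by (simp add: algebra_simps)
    also have "\<dots> \<le> - (c * (y1^2 + y3^2)) - (c * (y2^2 + y4^2))"
    proof -
      have "c * (y1^2 + y3^2) \<le> (mV/2) * (y1^2 + y3^2)" unfolding c_def by (intro mult_right_mono) auto
      moreover have "c * (y2^2 + y4^2) \<le> 1 * (y2^2 + y4^2)" unfolding c_def by (intro mult_right_mono) auto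
      then have "c * (y2^2 + y4^2) \<le> (y2^2 + y4^2)" by simp
      ultimately show ?thesis by linarith
    qed
    also have "\<dots> = - c * norm y ^ 2" unfolding ny by (simp add: algebra_simps)
    finally show "(\<Sum>i\<in>UNIV. w i * y$i * (\<Sum>j\<in>UNIV. M i j * y$j)) \<le> - c * norm y ^ 2" .
  qed
qed

lemma vector_4 [simp]:
 "(vector [x,y,z,w] ::('a::zero)^4)$1 = x"
 "(vector [x,y,z,w] ::('a::zero)^4)$2 = y"
 "(vector [x,y,z,w] ::('a::zero)^4)$3 = z"
 "(vector [x,y,z,w] ::('a::zero)^4)$4 = w"
  unfolding vector_def by simp_all

lemma hd_nth [derivative_intros]: "((\<lambda>x::real^'n. x $ i) has_derivative (\<lambda>h. h $ i)) F"
  by (rule bounded_linear_imp_has_derivative) (rule bounded_linear_vec_nth)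

lemma st_nth [simp]: "st V1 A1 V2 A2 $ 1 = V1" "st V1 A1 V2 A2 $ 2 = A1"
  "st V1 A1 V2 A2 $ 3 = V2" "st V1 A1 V2 A2 $ 4 = A2"
  by (simp_all add: st_def)

definition gfr :: "real \<Rightarrow> real \<Rightarrow> real" where "gfr a u = u / (u + a)"
definition hinv :: "real \<Rightarrow> real \<Rightarrow> real" where "hinv b u = 1 / (1 + b * u)"

lemma gfr_rderiv: "u + a \<noteq> 0 \<Longrightarrow> (gfr a has_real_derivative a / (u + a)^2) (at u)"
  unfolding gfr_def
  by (rule DERIV_cong, rule derivative_eq_intros refl | simp)+ (simp add: field_simps power2_eq_square)

lemma hinv_rderiv: "1 + b * u \<noteq> 0 \<Longrightarrow> (hinv b has_real_derivative - b / (1 + b * u)^2) (at u)"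
  unfolding hinv_def
  by (rule DERIV_cong, rule derivative_eq_intros refl | simp)+ (simp add: field_simps power2_eq_square)

lemma gfr_nth_deriv:
  assumes "x0 $ k + a \<noteq> 0"
  shows "((\<lambda>x::real^'n. gfr a (x $ k)) has_derivative (\<lambda>h. a / (x0 $ k + a)^2 * h $ k)) (at x0)"
proof -
  have "(gfr a has_derivative (*) (a / (x0 $ k + a)^2)) (at (x0 $ k))"
    using gfr_rderiv[OF assms] by (simp add: has_field_derivative_def)
  from has_derivative_compose[OF hd_nth this] show ?thesis by simp
qed

lemma hinv_nth_deriv:
  assumes "1 + b * x0 $ k \<noteq> 0"
  shows "((\<lambda>x::real^'n. hinv b (x $ k)) has_derivative (\<lambda>h. - b / (1 + b * x0 $ k)^2 * h $ k)) (at x0)"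
proof -
  have "(hinv b has_derivative (*) (- b / (1 + b * x0 $ k)^2)) (at (x0 $ k))"
    using hinv_rderiv[OF assms] by (simp add: has_field_derivative_def)
  from has_derivative_compose[OF hd_nth this] show ?thesis by simp
qed

lemma field_nth:
  "field p x $ 1 = rV p * gfr (a1 p) (x$2) * x$1 * (1 - x$1 / KV1 p)
       - dV12' p * hinv (b1 p) (x$2) * x$1 + dV21' p * hinv (b2 p) (x$4) * x$3 - muV1 p * x$1"
  "field p x $ 2 = rA p * x$2 * (1 - x$2 / KA1' p) - dA12' p * x$2 + dA21' p * x$4 - muA1 p * x$2"
  "field p x $ 3 = rV p * gfr (a2 p) (x$4) * x$3 * (1 - x$3 / KV2 p)
       - dV21' p * hinv (b2 p) (x$4) * x$3 + dV12' p * hinv (b1 p) (x$2) * x$1 - muV2 p * x$3"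
  "field p x $ 4 = rA p * x$4 * (1 - x$4 / KA2' p) - dA21' p * x$4 + dA12' p * x$2 - muA2 p * x$4"
  by (simp_all add: field_def Let_def gfr_def hinv_def)

definition Jm :: "params \<Rightarrow> real \<Rightarrow> real \<Rightarrow> real \<Rightarrow> real \<Rightarrow> 4 \<Rightarrow> 4 \<Rightarrow> real" where
  "Jm p V1 A1 V2 A2 i j = (vector [
     vector [rV p * gfr (a1 p) A1 * (1 - 2 * V1 / KV1 p) - dV12' p * hinv (b1 p) A1 - muV1 p,
             rV p * (a1 p / (A1 + a1 p)^2) * V1 * (1 - V1 / KV1 p) - dV12' p * (- b1 p / (1 + b1 p * A1)^2) * V1,
             dV21' p * hinv (b2 p) A2,
             dV21' p * (- b2 p / (1 + b2 p * A2)^2) * V2],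
     vector [0, rA p * (1 - 2 * A1 / KA1' p) - dA12' p - muA1 p, 0, dA21' p],
     vector [dV12' p * hinv (b1 p) A1,
             dV12' p * (- b1 p / (1 + b1 p * A1)^2) * V1,
             rV p * gfr (a2 p) A2 * (1 - 2 * V2 / KV2 p) - dV21' p * hinv (b2 p) A2 - muV2 p,
             rV p * (a2 p / (A2 + a2 p)^2) * V2 * (1 - V2 / KV2 p) - dV21' p * (- b2 p / (1 + b2 p * A2)^2) * V2],
     vector [0, dA12' p, 0, rA p * (1 - 2 * A2 / KA2' p) - dA21' p - muA2 p]] :: real^4^4) $ i $ j"

lemma field_deriv:
  assumes nz: "A1 + a1 p \<noteq> 0" "1 + b1 p * A1 \<noteq> 0" "A2 + a2 p \<noteq> 0" "1 + b2 p * A2 \<noteq> 0"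
    "KV1 p \<noteq> 0" "KV2 p \<noteq> 0" "KA1' p \<noteq> 0" "KA2' p \<noteq> 0"
  shows "((\<lambda>x. field p x $ i) has_derivative (\<lambda>h. \<Sum>j\<in>UNIV. Jm p V1 A1 V2 A2 i j * h$j)) (at (st V1 A1 V2 A2))"
proof -
  note G1 = gfr_nth_deriv[of "st V1 A1 V2 A2" 2 "a1 p"] and G2 = gfr_nth_deriv[of "st V1 A1 V2 A2" 4 "a2 p"]
  note H1 = hinv_nth_deriv[of "b1 p" "st V1 A1 V2 A2" 2] and H2 = hinv_nth_deriv[of "b2 p" "st V1 A1 V2 A2" 4]
  have "i = 1 \<or> i = 2 \<or> i = 3 \<or> i = 4" by (rule exhaust_4)
  then show ?thesis
  proof (elim disjE)
    assume i: "i = 1"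
    show ?thesis unfolding i field_nth
      apply (rule derivative_eq_intros G1 G2 H1 H2 refl | simp add: nz)+
      apply (rule ext)
      apply (simp add: sum_4 Jm_def nz)
      apply (simp add: algebra_simps diff_divide_distrib add_divide_distrib)
      done
  next
    assume i: "i = 2"
    show ?thesis unfolding i field_nth
      apply (rule derivative_eq_intros refl | simp add: nz)+
      apply (rule ext)
      apply (simp add: sum_4 Jm_def nz)
      apply (simp add: algebra_simps diff_divide_distrib add_divide_distrib)
      done
  next
    assume i: "i = 3"
    show ?thesis unfolding i field_nth
      apply (rule derivative_eq_intros G1 G2 H1 H2 refl | simp add: nz)+
      apply (rule ext)
      apply (simp add: sum_4 Jm_def nz)
      apply (simp add: algebra_simps diff_divide_distrib add_divide_distrib)
      done
  next
    assume i: "i = 4"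
    show ?thesis unfolding i field_nth
      apply (rule derivative_eq_intros refl | simp add: nz)+
      apply (rule ext)
      apply (simp add: sum_4 Jm_def nz)
      apply (simp add: algebra_simps diff_divide_distrib add_divide_distrib)
      done
  qed
qed

lemma LAS_model:
  assumes nz: "A1 + a1 p \<noteq> 0" "1 + b1 p * A1 \<noteq> 0" "A2 + a2 p \<noteq> 0" "1 + b2 p * A2 \<noteq> 0"
    "KV1 p \<noteq> 0" "KV2 p \<noteq> 0" "KA1' p \<noteq> 0" "KA2' p \<noteq> 0"
    and fe: "field p (st V1 A1 V2 A2) = 0"
    and V: "Jm p V1 A1 V2 A2 1 1 < 0" "Jm p V1 A1 V2 A2 1 3 > 0" "Jm p V1 A1 V2 A2 3 1 > 0"
       "Jm p V1 A1 V2 A2 1 1 * Jm p V1 A1 V2 A2 3 3 > Jm p V1 A1 V2 A2 1 3 * Jm p V1 A1 V2 A2 3 1"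
    and A: "Jm p V1 A1 V2 A2 2 2 < 0" "Jm p V1 A1 V2 A2 2 4 > 0" "Jm p V1 A1 V2 A2 4 2 > 0"
       "Jm p V1 A1 V2 A2 2 2 * Jm p V1 A1 V2 A2 4 4 > Jm p V1 A1 V2 A2 2 4 * Jm p V1 A1 V2 A2 4 2"
  shows "LAS (field p) (st V1 A1 V2 A2)"
proof -
  have z: "Jm p V1 A1 V2 A2 2 1 = 0" "Jm p V1 A1 V2 A2 2 3 = 0" "Jm p V1 A1 V2 A2 4 1 = 0" "Jm p V1 A1 V2 A2 4 3 = 0"
    by (simp_all add: Jm_def)
  obtain w c where w: "\<forall>i. w i > 0" and c: "c > 0" and Q: "\<forall>y. (\<Sum>i\<in>UNIV. w i * y$i * (\<Sum>j\<in>UNIV. Jm p V1 A1 V2 A2 i j * y$j)) \<le> - c * norm y ^ 2"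
    using block_Q[OF z V A] by blast
  show ?thesis
    by (rule LAS_deriv[OF field_deriv[OF nz] fe, of w c]) (use w c Q in auto)
qed

lemma det_pos:
  fixes u v \<alpha> \<beta> X Y :: real
  assumes "u > 0" "v > 0" "\<alpha> > 0" "\<beta> > 0" "X > 0" "Y > 0"
  shows "(-u - \<alpha> * (Y / X)) * (-v - \<beta> * (X / Y)) > \<alpha> * \<beta>"
proof -
  have "(-u - \<alpha> * (Y / X)) * (-v - \<beta> * (X / Y)) = u * v + u * (\<beta> * (X / Y)) + v * (\<alpha> * (Y / X)) + \<alpha> * \<beta>"
    using assms by (simp add: field_simps)
  moreover have "u * v > 0" "u * (\<beta> * (X / Y)) \<ge> 0" "v * (\<alpha> * (Y / X)) \<ge> 0" using assms by simp_all
  ultimately show ?thesis by linarith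
qed

lemma diag_neg: "u > 0 \<Longrightarrow> \<alpha> > 0 \<Longrightarrow> X > 0 \<Longrightarrow> Y > 0 \<Longrightarrow> -u - \<alpha> * (Y / X) < (0::real)"
  by (smt (verit) divide_pos_pos mult_pos_pos)

locale mp =
  fixes p :: params
  assumes pos: "rV p > 0" "rA p > 0" "a1 p > 0" "a2 p > 0" "b1 p > 0" "b2 p > 0"
    "cV p > 0" "cA p > 0" "KV1 p > 0" "KV2 p > 0" "KA1 p > 0" "KA2 p > 0"
    and hn: "hn p > 1"
    and mu: "muV1 p > 0" "muV2 p > 0" "muA1 p > 0" "muA2 p > 0"
    and d: "dV12 p > 0" "dV21 p > 0" "dA12 p > 0" "dA21 p > 0"
    and al: "0 < al1 p" "al1 p < 1" "0 < al2 p" "al2 p < 1"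
begin

lemma dpos: "dV12' p > 0" "dV21' p > 0" "dA12' p > 0" "dA21' p > 0"
  using pos d al by (simp_all add: dV12'_def dV21'_def dA12'_def dA21'_def add_pos_pos)

lemma Kpos: "KA1' p > 0" "KA2' p > 0"
  using pos al by (simp_all add: KA1'_def KA2'_def)

lemma nz:
  assumes "A1 \<ge> 0" "A2 \<ge> 0"
  shows "A1 + a1 p \<noteq> 0" "1 + b1 p * A1 \<noteq> 0" "A2 + a2 p \<noteq> 0" "1 + b2 p * A2 \<noteq> 0"
    "KV1 p \<noteq> 0" "KV2 p \<noteq> 0" "KA1' p \<noteq> 0" "KA2' p \<noteq> 0"
  using assms pos Kpos by (auto simp: add_nonneg_pos) (smt (verit) mult_nonneg_nonneg)+

lemma gh:
  shows "A > 0 \<Longrightarrow> a > 0 \<Longrightarrow> gfr a A > 0" "gfr a 0 = 0"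
    "A \<ge> 0 \<Longrightarrow> b > 0 \<Longrightarrow> hinv b A > 0" "hinv b 0 = 1"
proof -
  show "A \<ge> 0 \<Longrightarrow> b > 0 \<Longrightarrow> hinv b A > 0"
    unfolding hinv_def by (simp add: add_pos_nonneg)
qed (simp_all add: gfr_def hinv_def)

lemma Ablock:
  assumes A: "A1 > 0" "A2 > 0" and fe: "field p (st V1 A1 V2 A2) = 0"
  shows "Jm p V1 A1 V2 A2 2 2 < 0" "Jm p V1 A1 V2 A2 2 4 > 0" "Jm p V1 A1 V2 A2 4 2 > 0"
       "Jm p V1 A1 V2 A2 2 2 * Jm p V1 A1 V2 A2 4 4 > Jm p V1 A1 V2 A2 2 4 * Jm p V1 A1 V2 A2 4 2"
proof -
  define lhs_e2 where "lhs_e2 = rA p * A1 * (1 - A1 / KA1' p) - dA12' p * A1 + dA21' p * A2 - muA1 p * A1"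
  have e2: "lhs_e2 = 0" unfolding lhs_e2_def
    using arg_cong[OF fe, of "\<lambda>v. v $ 2"] by (simp add: field_nth)
  define lhs_e4 where "lhs_e4 = rA p * A2 * (1 - A2 / KA2' p) - dA21' p * A2 + dA12' p * A1 - muA2 p * A2"
  have e4: "lhs_e4 = 0" unfolding lhs_e4_def
    using arg_cong[OF fe, of "\<lambda>v. v $ 4"] by (simp add: field_nth)
  have j22: "Jm p V1 A1 V2 A2 2 2 = - (rA p * A1 / KA1' p) - dA21' p * (A2 / A1)"
  proof -
    have "Jm p V1 A1 V2 A2 2 2 * A1 - (- (rA p * A1 / KA1' p) - dA21' p * (A2 / A1)) * A1 = lhs_e2"
      using A Kpos unfolding lhs_e2_def by (simp add: Jm_def field_simps)
    then have "Jm p V1 A1 V2 A2 2 2 * A1 = (- (rA p * A1 / KA1' p) - dA21' p * (A2 / A1)) * A1" using e2 unfolding lhs_e2_def by simp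
    then show ?thesis using A by simp
  qed
  have j44: "Jm p V1 A1 V2 A2 4 4 = - (rA p * A2 / KA2' p) - dA12' p * (A1 / A2)"
  proof -
    have "Jm p V1 A1 V2 A2 4 4 * A2 - (- (rA p * A2 / KA2' p) - dA12' p * (A1 / A2)) * A2 = lhs_e4"
      using A Kpos unfolding lhs_e4_def by (simp add: Jm_def field_simps)
    then have "Jm p V1 A1 V2 A2 4 4 * A2 = (- (rA p * A2 / KA2' p) - dA12' p * (A1 / A2)) * A2" using e4 unfolding lhs_e4_def by simp
    then show ?thesis using A by simp
  qed
  have j24: "Jm p V1 A1 V2 A2 2 4 = dA21' p" and j42: "Jm p V1 A1 V2 A2 4 2 = dA12' p"
    by (simp_all add: Jm_def)
  have u: "rA p * A1 / KA1' p > 0" "rA p * A2 / KA2' p > 0" using pos Kpos A by simp_all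
  show "Jm p V1 A1 V2 A2 2 2 < 0" unfolding j22 by (rule diag_neg[OF u(1) dpos(4) A(1) A(2)])
  show "Jm p V1 A1 V2 A2 2 4 > 0" "Jm p V1 A1 V2 A2 4 2 > 0" using j24 j42 dpos by simp_all
  show "Jm p V1 A1 V2 A2 2 2 * Jm p V1 A1 V2 A2 4 4 > Jm p V1 A1 V2 A2 2 4 * Jm p V1 A1 V2 A2 4 2"
    unfolding j22 j44 j24 j42 by (rule det_pos[OF u dpos(4) dpos(3) A])
qed

lemma Vblock:
  assumes A: "A1 > 0" "A2 > 0" and V: "V1 > 0" "V2 > 0" and fe: "field p (st V1 A1 V2 A2) = 0"
  shows "Jm p V1 A1 V2 A2 1 1 < 0" "Jm p V1 A1 V2 A2 1 3 > 0" "Jm p V1 A1 V2 A2 3 1 > 0"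
       "Jm p V1 A1 V2 A2 1 1 * Jm p V1 A1 V2 A2 3 3 > Jm p V1 A1 V2 A2 1 3 * Jm p V1 A1 V2 A2 3 1"
proof -
  define g1 where "g1 = gfr (a1 p) A1"
  define g2 where "g2 = gfr (a2 p) A2"
  define h1 where "h1 = hinv (b1 p) A1"
  define h2 where "h2 = hinv (b2 p) A2"
  have g: "g1 > 0" "g2 > 0" "h1 > 0" "h2 > 0" unfolding g1_def g2_def h1_def h2_def
    using gh A pos by auto
  define lhs_e1 where "lhs_e1 = rV p * g1 * V1 * (1 - V1 / KV1 p) - dV12' p * h1 * V1 + dV21' p * h2 * V2 - muV1 p * V1"
  have e1: "lhs_e1 = 0" unfolding lhs_e1_def
    using arg_cong[OF fe, of "\<lambda>v. v $ 1"] by (simp add: field_nth g1_def h1_def h2_def)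
  define lhs_e3 where "lhs_e3 = rV p * g2 * V2 * (1 - V2 / KV2 p) - dV21' p * h2 * V2 + dV12' p * h1 * V1 - muV2 p * V2"
  have e3: "lhs_e3 = 0" unfolding lhs_e3_def
    using arg_cong[OF fe, of "\<lambda>v. v $ 3"] by (simp add: field_nth g2_def h1_def h2_def)
  have j11: "Jm p V1 A1 V2 A2 1 1 = - (rV p * g1 * V1 / KV1 p) - (dV21' p * h2) * (V2 / V1)"
  proof -
    have "Jm p V1 A1 V2 A2 1 1 * V1 - (- (rV p * g1 * V1 / KV1 p) - (dV21' p * h2) * (V2 / V1)) * V1 = lhs_e1"
      using V pos unfolding lhs_e1_def by (simp add: Jm_def g1_def h1_def h2_def field_simps)
    then have "Jm p V1 A1 V2 A2 1 1 * V1 = (- (rV p * g1 * V1 / KV1 p) - (dV21' p * h2) * (V2 / V1)) * V1" using e1 unfolding lhs_e1_def by simp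
    then show ?thesis using V by simp
  qed
  have j33: "Jm p V1 A1 V2 A2 3 3 = - (rV p * g2 * V2 / KV2 p) - (dV12' p * h1) * (V1 / V2)"
  proof -
    have "Jm p V1 A1 V2 A2 3 3 * V2 - (- (rV p * g2 * V2 / KV2 p) - (dV12' p * h1) * (V1 / V2)) * V2 = lhs_e3"
      using V pos unfolding lhs_e3_def by (simp add: Jm_def g2_def h1_def h2_def field_simps)
    then have "Jm p V1 A1 V2 A2 3 3 * V2 = (- (rV p * g2 * V2 / KV2 p) - (dV12' p * h1) * (V1 / V2)) * V2" using e3 unfolding lhs_e3_def by simp
    then show ?thesis using V by simp
  qed
  have j13: "Jm p V1 A1 V2 A2 1 3 = dV21' p * h2" and j31: "Jm p V1 A1 V2 A2 3 1 = dV12' p * h1"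
    by (simp_all add: Jm_def h1_def h2_def)
  have u: "rV p * g1 * V1 / KV1 p > 0" "rV p * g2 * V2 / KV2 p > 0" using pos g V by simp_all
  have al: "dV21' p * h2 > 0" "dV12' p * h1 > 0" using dpos g by simp_all
  show "Jm p V1 A1 V2 A2 1 1 < 0" unfolding j11 by (rule diag_neg[OF u(1) al(1) V(1) V(2)])
  show "Jm p V1 A1 V2 A2 1 3 > 0" "Jm p V1 A1 V2 A2 3 1 > 0" using j13 j31 al by simp_all
  show "Jm p V1 A1 V2 A2 1 1 * Jm p V1 A1 V2 A2 3 3 > Jm p V1 A1 V2 A2 1 3 * Jm p V1 A1 V2 A2 3 1"
    unfolding j11 j33 j13 j31 by (rule det_pos[OF u al V])
qed

lemma LAS_coex:
  assumes "V1 > 0" "A1 > 0" "V2 > 0" "A2 > 0" "field p (st V1 A1 V2 A2) = 0"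
  shows "LAS (field p) (st V1 A1 V2 A2)"
  using assms by (intro LAS_model nz Vblock Ablock) auto

end

lemma exist2:
  fixes \<rho>1 \<rho>2 K1 K2 \<delta>1 \<delta>2 \<sigma>1 \<sigma>2 :: real
  assumes r1: "\<rho>1 > 0" and r2: "\<rho>2 > 0" and K1: "K1 > 0" and K2: "K2 > 0"
    and s1: "\<sigma>1 > 0" and s2: "\<sigma>2 > 0" and dom: "\<rho>1 \<ge> \<delta>1"
  shows "\<exists>X Y. X > 0 \<and> Y > 0 \<and> \<rho>1 * X * (1 - X / K1) - \<delta>1 * X + \<sigma>2 * Y = 0
                \<and> \<rho>2 * Y * (1 - Y / K2) - \<delta>2 * Y + \<sigma>1 * X = 0"
proof -
  define l where "l = (\<lambda>X. (\<delta>1 - \<rho>1 + \<rho>1 * X / K1) / \<sigma>2)"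
  define \<Gamma> where "\<Gamma> = (\<lambda>X. \<sigma>1 + l X * (\<rho>2 - \<delta>2 - \<rho>2 * X * l X / K2))"
  define Xs where "Xs = K1 * (\<rho>1 - \<delta>1) / \<rho>1"
  have Xs0: "Xs \<ge> 0" unfolding Xs_def using r1 K1 dom by simp
  have lXs: "l Xs = 0" unfolding l_def Xs_def using r1 K1 by (simp add: field_simps)
  have lpos: "l X > 0" if "X > Xs" for X
  proof -
    have "\<rho>1 * X / K1 > \<rho>1 * Xs / K1" using that r1 K1 by (simp add: divide_strict_right_mono)
    moreover have "\<rho>1 * Xs / K1 = \<rho>1 - \<delta>1" unfolding Xs_def using r1 K1 by simp
    ultimately show ?thesis unfolding l_def using s2 by simp
  qed
  have cont: "isCont \<Gamma> x" for x unfolding \<Gamma>_def l_def using K1 K2 s2 by (intro continuous_intros) auto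
  have GXs: "\<Gamma> Xs = \<sigma>1" unfolding \<Gamma>_def using lXs by simp
  have "\<forall>\<^sub>F x in at Xs. \<Gamma> x > 0"
    using order_tendstoD(1)[OF cont[of Xs, unfolded isCont_def] , of 0] GXs s1 by (simp add: eventually_at_filter)
  then obtain dd where dd: "dd > 0" and ddp: "\<And>x. x \<noteq> Xs \<Longrightarrow> dist x Xs < dd \<Longrightarrow> \<Gamma> x > 0"
    unfolding eventually_at by blast
  define a where "a = Xs + dd / 2"
  have a: "a > Xs" "\<Gamma> a > 0" using dd ddp[of a] unfolding a_def by (auto simp: dist_real_def)
  define b where "b = max (a + 1) (max (K1 * (\<sigma>2 + \<rho>1 - \<delta>1) / \<rho>1) (K2 * (\<bar>\<rho>2 - \<delta>2\<bar> + \<sigma>1 + 1) / \<rho>2))"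
  have ab: "a \<le> b" unfolding b_def by simp
  have lb: "l b \<ge> 1"
  proof -
    have "b \<ge> K1 * (\<sigma>2 + \<rho>1 - \<delta>1) / \<rho>1" unfolding b_def by simp
    then have "\<rho>1 * b / K1 \<ge> \<sigma>2 + \<rho>1 - \<delta>1" using r1 K1 by (simp add: field_simps)
    then show ?thesis unfolding l_def using s2 by (simp add: field_simps)
  qed
  have bb: "\<rho>2 * b / K2 \<ge> \<bar>\<rho>2 - \<delta>2\<bar> + \<sigma>1 + 1"
  proof -
    have "b \<ge> K2 * (\<bar>\<rho>2 - \<delta>2\<bar> + \<sigma>1 + 1) / \<rho>2" unfolding b_def by simp
    then show ?thesis using r2 K2 by (simp add: field_simps)
  qed
  have Gb: "\<Gamma> b \<le> 0"
  proof -
    have bpos: "b > 0" using ab a Xs0 by linarith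
    have "\<rho>2 * b / K2 * 1 \<le> \<rho>2 * b / K2 * l b"
      by (rule mult_left_mono[OF lb]) (use r2 K2 bpos in simp)
    moreover have "\<rho>2 * b * l b / K2 = \<rho>2 * b / K2 * l b" by simp
    ultimately have "\<rho>2 * b * l b / K2 \<ge> \<rho>2 * b / K2" by linarith
    then have "\<rho>2 - \<delta>2 - \<rho>2 * b * l b / K2 \<le> - (\<sigma>1 + 1)" using bb by linarith
    then have "l b * (\<rho>2 - \<delta>2 - \<rho>2 * b * l b / K2) \<le> l b * (- (\<sigma>1 + 1))"
      using lb by (intro mult_left_mono) auto
    also have "\<dots> \<le> 1 * (- (\<sigma>1 + 1))" using lb s1 by (intro mult_right_mono_neg) auto
    finally show ?thesis unfolding \<Gamma>_def by simp
  qed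
  obtain X where X: "a \<le> X" "X \<le> b" "\<Gamma> X = 0"
    using IVT2[of \<Gamma> b 0 a, OF Gb less_imp_le[OF a(2)] ab] cont by blast
  have Xp: "X > Xs" using X a by simp
  have X0: "X > 0" using Xp Xs0 by simp
  define Y where "Y = X * l X"
  have Y0: "Y > 0" unfolding Y_def using X0 lpos[OF Xp] by simp
  have eq1: "\<rho>1 * X * (1 - X / K1) - \<delta>1 * X + \<sigma>2 * Y = 0"
    unfolding Y_def l_def using K1 s2 by (simp add: field_simps)
  have "\<rho>2 * Y * (1 - Y / K2) - \<delta>2 * Y + \<sigma>1 * X = X * \<Gamma> X"
    unfolding Y_def \<Gamma>_def using K2 by (simp add: field_simps)
  then have eq2: "\<rho>2 * Y * (1 - Y / K2) - \<delta>2 * Y + \<sigma>1 * X = 0" using X by simp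
  show ?thesis using X0 Y0 eq1 eq2 by blast
qed

context mp begin

lemma field_zero_iff:
  "field p (st V1 A1 V2 A2) = 0 \<longleftrightarrow>
    (rV p * gfr (a1 p) A1 * V1 * (1 - V1 / KV1 p) - dV12' p * hinv (b1 p) A1 * V1 + dV21' p * hinv (b2 p) A2 * V2 - muV1 p * V1 = 0
   \<and> rA p * A1 * (1 - A1 / KA1' p) - dA12' p * A1 + dA21' p * A2 - muA1 p * A1 = 0
   \<and> rV p * gfr (a2 p) A2 * V2 * (1 - V2 / KV2 p) - dV21' p * hinv (b2 p) A2 * V2 + dV12' p * hinv (b1 p) A1 * V1 - muV2 p * V2 = 0
   \<and> rA p * A2 * (1 - A2 / KA2' p) - dA21' p * A2 + dA12' p * A1 - muA2 p * A2 = 0)"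
  by (simp add: vec_eq_iff forall_4 field_nth)

lemma field_origin: "field p (st 0 0 0 0) = 0"
  by (simp add: field_zero_iff)

lemma neg_first: "(a::real) * d > q \<Longrightarrow> q > 0 \<Longrightarrow> a + d < 0 \<Longrightarrow> a < 0"
  by (smt (verit) mult_nonneg_nonpos)

lemma LAS_origin:
  assumes "rA p < rAmin p"
  shows "LAS (field p) (st 0 0 0 0)"
proof -
  define x where "x = rA p - dA12' p - muA1 p"
  define y where "y = rA p - dA21' p - muA2 p"
  define P where "P = dA21' p * dA12' p"
  have P: "P > 0" unfolding P_def using dpos by simp
  have Delta: "DeltarA p = (x - y)^2 + 4 * P"
    unfolding DeltarA_def x_def y_def P_def by (simp add: algebra_simps)
  have D0: "DeltarA p \<ge> 0" using Delta P by simp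
  have "x + y < - sqrt (DeltarA p)"
  proof -
    have "2 * rA p < dA12' p + muA1 p + dA21' p + muA2 p - sqrt (DeltarA p)"
      using assms unfolding rAmin_def rAbar_def by (simp add: field_simps)
    then show ?thesis unfolding x_def y_def by linarith
  qed
  then have s: "0 \<le> sqrt (DeltarA p)" "sqrt (DeltarA p) < -(x+y)" using D0 by simp_all
  have "(sqrt (DeltarA p))^2 < (-(x+y))^2"
    by (rule power_strict_mono[OF s(2) s(1)]) simp
  moreover have "(-(x+y))^2 = (x+y)^2" by (rule power2_minus)
  ultimately have "DeltarA p < (x+y)^2" using D0 by simp
  then have "(x - y)^2 + 4 * P < (x + y)^2" using Delta by simp
  then have xy: "x * y > P" by (simp add: power2_eq_square algebra_simps)
  have xpos: "x + y < 0" using s by linarith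
  have x: "x < 0" by (rule neg_first[OF xy P xpos])
  have nz0: "0 + a1 p \<noteq> 0" "1 + b1 p * 0 \<noteq> 0" "0 + a2 p \<noteq> 0" "1 + b2 p * 0 \<noteq> 0"
    "KV1 p \<noteq> 0" "KV2 p \<noteq> 0" "KA1' p \<noteq> 0" "KA2' p \<noteq> 0"
    using nz[of 0 0] by simp_all
  have J: "Jm p 0 0 0 0 1 1 = - dV12' p - muV1 p" "Jm p 0 0 0 0 3 3 = - dV21' p - muV2 p"
    "Jm p 0 0 0 0 1 3 = dV21' p" "Jm p 0 0 0 0 3 1 = dV12' p"
    "Jm p 0 0 0 0 2 2 = x" "Jm p 0 0 0 0 4 4 = y" "Jm p 0 0 0 0 2 4 = dA21' p" "Jm p 0 0 0 0 4 2 = dA12' p"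
    by (simp_all add: Jm_def gh x_def y_def)
  have Vdet: "(- dV12' p - muV1 p) * (- dV21' p - muV2 p) > dV21' p * dV12' p"
  proof -
    have "(- dV12' p - muV1 p) * (- dV21' p - muV2 p) = dV21' p * dV12' p + (dV12' p * muV2 p + muV1 p * dV21' p + muV1 p * muV2 p)"
      by (simp add: algebra_simps)
    moreover have "dV12' p * muV2 p + muV1 p * dV21' p + muV1 p * muV2 p > 0"
      using dpos mu by (simp add: add_pos_pos)
    ultimately show ?thesis by linarith
  qed
  show ?thesis
    apply (rule LAS_model[OF nz0 field_origin])
    unfolding J using dpos mu Vdet x xy P_def by (simp_all add: mult.commute)
qed

lemma LAS_part2:
  assumes A: "A1 > 0" "A2 > 0" and fe: "field p (st 0 A1 0 A2) = 0"
    and B: "B1 p A1 A2 < 0" "B2 p A1 A2 > 0"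
  shows "LAS (field p) (st 0 A1 0 A2)"
proof -
  have J: "Jm p 0 A1 0 A2 1 1 = j11 p A1" "Jm p 0 A1 0 A2 3 3 = j33 p A2"
    "Jm p 0 A1 0 A2 1 3 = dV21' p / (1 + b2 p * A2)" "Jm p 0 A1 0 A2 3 1 = dV12' p / (1 + b1 p * A1)"
    by (simp_all add: Jm_def j11_def j33_def gfr_def hinv_def)
  have pos13: "dV21' p / (1 + b2 p * A2) > 0" "dV12' p / (1 + b1 p * A1) > 0"
    using dpos A pos by (simp_all add: add_pos_pos)
  have det: "j11 p A1 * j33 p A2 > dV21' p / (1 + b2 p * A2) * (dV12' p / (1 + b1 p * A1))"
    using B(2) unfolding B2_def by simp
  have j11: "j11 p A1 < 0"
    by (rule neg_first[OF det mult_pos_pos[OF pos13]]) (use B(1) in \<open>simp add: B1_def\<close>)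
  show ?thesis
    apply (rule LAS_model[OF nz[OF less_imp_le[OF A(1)] less_imp_le[OF A(2)]] fe])
    unfolding J using j11 pos13 det Ablock[OF A fe] by simp_all
qed

lemma exist_A:
  assumes "Q0A1 p \<ge> 1 \<or> Q0A2 p \<ge> 1"
  shows "\<exists>A1 A2. A1 > 0 \<and> A2 > 0 \<and> field p (st 0 A1 0 A2) = 0"
proof -
  have den: "muA1 p + dA12' p > 0" "muA2 p + dA21' p > 0" using mu dpos by simp_all
  have K: "KA1' p > 0" "KA2' p > 0" by (rule Kpos)+
  from assms show ?thesis
  proof
    assume "Q0A1 p \<ge> 1"
    then have "rA p \<ge> dA12' p + muA1 p" using den unfolding Q0A1_def by (simp add: field_simps)
    from exist2[OF pos(2) pos(2) K(1) K(2) dpos(3) dpos(4) this, of "dA21' p + muA2 p"]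
    obtain X Y where XY: "X > 0" "Y > 0"
      "rA p * X * (1 - X / KA1' p) - (dA12' p + muA1 p) * X + dA21' p * Y = 0"
      "rA p * Y * (1 - Y / KA2' p) - (dA21' p + muA2 p) * Y + dA12' p * X = 0" by blast
    have "field p (st 0 X 0 Y) = 0" unfolding field_zero_iff using XY(3,4)
      by (simp add: algebra_simps)
    then show ?thesis using XY by blast
  next
    assume "Q0A2 p \<ge> 1"
    then have "rA p \<ge> dA21' p + muA2 p" using den unfolding Q0A2_def by (simp add: field_simps)
    from exist2[OF pos(2) pos(2) K(2) K(1) dpos(4) dpos(3) this, of "dA12' p + muA1 p"]
    obtain X Y where XY: "X > 0" "Y > 0"
      "rA p * X * (1 - X / KA2' p) - (dA21' p + muA2 p) * X + dA12' p * Y = 0"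
      "rA p * Y * (1 - Y / KA1' p) - (dA12' p + muA1 p) * Y + dA21' p * X = 0" by blast
    have "field p (st 0 Y 0 X) = 0" unfolding field_zero_iff using XY(3,4)
      by (simp add: algebra_simps)
    then show ?thesis using XY by blast
  qed
qed

lemma exist_V:
  assumes A: "A1 > 0" "A2 > 0" and fe: "field p (st 0 A1 0 A2) = 0"
    and S: "S0V1 p A1 \<ge> 1 \<or> S0V2 p A2 \<ge> 1"
  shows "\<exists>V1 V2. V1 > 0 \<and> V2 > 0 \<and> field p (st V1 A1 V2 A2) = 0"
proof -
  define g1 where "g1 = gfr (a1 p) A1"
  define g2 where "g2 = gfr (a2 p) A2"
  define h1 where "h1 = hinv (b1 p) A1"
  define h2 where "h2 = hinv (b2 p) A2"
  have g: "g1 > 0" "g2 > 0" "h1 > 0" "h2 > 0" unfolding g1_def g2_def h1_def h2_def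
    using gh A pos by auto
  have r: "rV p * g1 > 0" "rV p * g2 > 0" using pos g by simp_all
  have sg: "dV12' p * h1 > 0" "dV21' p * h2 > 0" using dpos g by simp_all
  have den: "dV12' p * h1 + muV1 p > 0" "dV21' p * h2 + muV2 p > 0" using sg mu by simp_all
  have Aeq: "rA p * A1 * (1 - A1 / KA1' p) - dA12' p * A1 + dA21' p * A2 - muA1 p * A1 = 0"
     "rA p * A2 * (1 - A2 / KA2' p) - dA21' p * A2 + dA12' p * A1 - muA2 p * A2 = 0"
    using fe unfolding field_zero_iff by simp_all
  have S1: "S0V1 p A1 = rV p * g1 / (dV12' p * h1 + muV1 p)"
    unfolding S0V1_def g1_def h1_def gfr_def hinv_def by simp
  have S2: "S0V2 p A2 = rV p * g2 / (dV21' p * h2 + muV2 p)"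
    unfolding S0V2_def g2_def h2_def gfr_def hinv_def by simp
  from S show ?thesis
  proof
    assume "S0V1 p A1 \<ge> 1"
    then have "rV p * g1 \<ge> dV12' p * h1 + muV1 p" using den unfolding S1 by (simp add: field_simps)
    from exist2[OF r(1) r(2) pos(9) pos(10) sg(1) sg(2) this, of "dV21' p * h2 + muV2 p"]
    obtain X Y where XY: "X > 0" "Y > 0"
      "rV p * g1 * X * (1 - X / KV1 p) - (dV12' p * h1 + muV1 p) * X + dV21' p * h2 * Y = 0"
      "rV p * g2 * Y * (1 - Y / KV2 p) - (dV21' p * h2 + muV2 p) * Y + dV12' p * h1 * X = 0" by blast
    have "field p (st X A1 Y A2) = 0" unfolding field_zero_iff using XY(3,4) Aeq
      unfolding g1_def g2_def h1_def h2_def by (simp add: algebra_simps)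
    then show ?thesis using XY by blast
  next
    assume "S0V2 p A2 \<ge> 1"
    then have "rV p * g2 \<ge> dV21' p * h2 + muV2 p" using den unfolding S2 by (simp add: field_simps)
    from exist2[OF r(2) r(1) pos(10) pos(9) sg(2) sg(1) this, of "dV12' p * h1 + muV1 p"]
    obtain X Y where XY: "X > 0" "Y > 0"
      "rV p * g2 * X * (1 - X / KV2 p) - (dV21' p * h2 + muV2 p) * X + dV12' p * h1 * Y = 0"
      "rV p * g1 * Y * (1 - Y / KV1 p) - (dV12' p * h1 + muV1 p) * Y + dV21' p * h2 * X = 0" by blast
    have "field p (st Y A1 X A2) = 0" unfolding field_zero_iff using XY(3,4) Aeq
      unfolding g1_def g2_def h1_def h2_def by (simp add: algebra_simps)
    then show ?thesis using XY by blast
  qed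
qed

end

context mp begin

lemma main:
  shows
    "(field p (st 0 0 0 0) = 0 \<and> (rA p < rAmin p \<longrightarrow> LAS (field p) (st 0 0 0 0)))
   \<and> ((Q0A1 p \<ge> 1 \<or> Q0A2 p \<ge> 1) \<longrightarrow>
        (\<exists>A1 A2. A1 > 0 \<and> A2 > 0 \<and> field p (st 0 A1 0 A2) = 0)
      \<and> (\<forall>A1 A2. A1 > 0 \<and> A2 > 0 \<and> field p (st 0 A1 0 A2) = 0
               \<and> B1 p A1 A2 < 0 \<and> B2 p A1 A2 > 0 \<longrightarrow> LAS (field p) (st 0 A1 0 A2)))
   \<and> (\<forall>A1p A2p. (Q0A1 p \<ge> 1 \<or> Q0A2 p \<ge> 1) \<and> A1p > 0 \<and> A2p > 0
          \<and> field p (st 0 A1p 0 A2p) = 0 \<and> (S0V1 p A1p \<ge> 1 \<or> S0V2 p A2p \<ge> 1) \<longrightarrow>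
        (\<exists>V1 V2. V1 > 0 \<and> V2 > 0 \<and> field p (st V1 A1p V2 A2p) = 0)
      \<and> (\<forall>V1 A1 V2 A2. V1 > 0 \<and> A1 > 0 \<and> V2 > 0 \<and> A2 > 0
            \<and> field p (st V1 A1 V2 A2) = 0
            \<and> C1 p V1 A1 V2 A2 > 0 \<and> C2 p V1 A1 V2 A2 > 0 \<longrightarrow> LAS (field p) (st V1 A1 V2 A2)))"
proof (intro conjI impI allI)
  show "field p (st 0 0 0 0) = 0" by (rule field_origin)
next
  assume "rA p < rAmin p" then show "LAS (field p) (st 0 0 0 0)" by (rule LAS_origin)
next
  assume "Q0A1 p \<ge> 1 \<or> Q0A2 p \<ge> 1"
  then show "\<exists>A1 A2. A1 > 0 \<and> A2 > 0 \<and> field p (st 0 A1 0 A2) = 0" by (rule exist_A)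
next
  fix A1 A2
  assume "A1 > 0 \<and> A2 > 0 \<and> field p (st 0 A1 0 A2) = 0 \<and> B1 p A1 A2 < 0 \<and> B2 p A1 A2 > 0"
  then show "LAS (field p) (st 0 A1 0 A2)" using LAS_part2 by blast
next
  fix A1p A2p
  assume "(Q0A1 p \<ge> 1 \<or> Q0A2 p \<ge> 1) \<and> A1p > 0 \<and> A2p > 0
          \<and> field p (st 0 A1p 0 A2p) = 0 \<and> (S0V1 p A1p \<ge> 1 \<or> S0V2 p A2p \<ge> 1)"
  then show "\<exists>V1 V2. V1 > 0 \<and> V2 > 0 \<and> field p (st V1 A1p V2 A2p) = 0"
    using exist_V by blast
next
  fix A1p A2p V1 A1 V2 A2
  assume "V1 > 0 \<and> A1 > 0 \<and> V2 > 0 \<and> A2 > 0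
            \<and> field p (st V1 A1 V2 A2) = 0
            \<and> C1 p V1 A1 V2 A2 > 0 \<and> C2 p V1 A1 V2 A2 > 0"
  then show "LAS (field p) (st V1 A1 V2 A2)" using LAS_coex by blast
qed

end

theorem theorem3:
  fixes p :: params
  assumes pos: "rV p > 0" "rA p > 0" "a1 p > 0" "a2 p > 0" "b1 p > 0" "b2 p > 0"
    "cV p > 0" "cA p > 0" "KV1 p > 0" "KV2 p > 0" "KA1 p > 0" "KA2 p > 0"
    and hn: "hn p > 1"
    and mu: "muV1 p > 0" "muV2 p > 0" "muA1 p > 0" "muA2 p > 0"
    and d: "dV12 p > 0" "dV21 p > 0" "dA12 p > 0" "dA21 p > 0"
    and al: "0 < al1 p" "al1 p < 1" "0 < al2 p" "al2 p < 1"
  shows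
    "(field p (st 0 0 0 0) = 0 \<and> (rA p < rAmin p \<longrightarrow> LAS (field p) (st 0 0 0 0)))
   \<and> ((Q0A1 p \<ge> 1 \<or> Q0A2 p \<ge> 1) \<longrightarrow>
        (\<exists>A1 A2. A1 > 0 \<and> A2 > 0 \<and> field p (st 0 A1 0 A2) = 0)
      \<and> (\<forall>A1 A2. A1 > 0 \<and> A2 > 0 \<and> field p (st 0 A1 0 A2) = 0
               \<and> B1 p A1 A2 < 0 \<and> B2 p A1 A2 > 0 \<longrightarrow> LAS (field p) (st 0 A1 0 A2)))
   \<and> (\<forall>A1p A2p. (Q0A1 p \<ge> 1 \<or> Q0A2 p \<ge> 1) \<and> A1p > 0 \<and> A2p > 0
          \<and> field p (st 0 A1p 0 A2p) = 0 \<and> (S0V1 p A1p \<ge> 1 \<or> S0V2 p A2p \<ge> 1) \<longrightarrow>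
        (\<exists>V1 V2. V1 > 0 \<and> V2 > 0 \<and> field p (st V1 A1p V2 A2p) = 0)
      \<and> (\<forall>V1 A1 V2 A2. V1 > 0 \<and> A1 > 0 \<and> V2 > 0 \<and> A2 > 0
            \<and> field p (st V1 A1 V2 A2) = 0
            \<and> C1 p V1 A1 V2 A2 > 0 \<and> C2 p V1 A1 V2 A2 > 0 \<longrightarrow> LAS (field p) (st V1 A1 V2 A2)))"
proof -
  interpret mp p by (unfold_locales) (use assms in auto)
  show ?thesis by (rule main)
qed

end
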